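(* Let $r$ be a positive integer, let $G$ be a graph on $n$ vertices, and let $\mathcal{G}_0$ be the auxiliary graph of $G$ defined below. Suppose $\mathcal{G}_0$ has average degree $d>0$. Then there exist $D_1,D_2\geq d/4$ and a non-empty bipartite subgraph $\mathcal{G}$ of $\mathcal{G}_0$ with parts $X_1,X_2$ such that for every $x\in X_1$ we have $d_{\mathcal{G}}(x)\geq\frac{D_1}{256r^2(\log n)^2}$ and $d_{\mathcal{G}_0}(x)\leq D_1$, and for every $x\in X_2$ we have $d_{\mathcal{G}}(x)\geq\frac{D_2}{256r^2(\log n)^2}$ and $d_{\mathcal{G}_0}(x)\leq D_2$.
   Context: Given a graph $G$ and a positive integer $r$, the auxiliary graph $\mathcal{G}_0$ has as vertex set the family of all $r$-element subsets of $V(G)$, and two such sets $U,W$ are adjacent in $\mathcal{G}_0$ if $U\cap W=\emptyset$ and $uw\in E(G)$ for all $u\in U$, $w\in W$. $d_H(x)$ denotes the degree of $x$ in $H$. Logarithms are base $2$. *)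

theory Defs
  imports Complex_Main
begin

definition simple_graph :: "'a set \<Rightarrow> ('a \<Rightarrow> 'a \<Rightarrow> bool) \<Rightarrow> bool" where
  "simple_graph V E \<longleftrightarrow> finite V \<and> (\<forall>u v. E u v \<longrightarrow> u \<in> V \<and> v \<in> V)
     \<and> (\<forall>u v. E u v \<longrightarrow> E v u) \<and> (\<forall>u. \<not> E u u)"

definition aux_vertices :: "'a set \<Rightarrow> nat \<Rightarrow> 'a set set" where
  "aux_vertices V r = {U. U \<subseteq> V \<and> card U = r}"

definition aux_adj :: "'a set \<Rightarrow> ('a \<Rightarrow> 'a \<Rightarrow> bool) \<Rightarrow> nat \<Rightarrow> 'a set \<Rightarrow> 'a set \<Rightarrow> bool" where
  "aux_adj V E r U W \<longleftrightarrow> U \<in> aux_vertices V r \<and> W \<in> aux_vertices V r \<and>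
     U \<inter> W = {} \<and> (\<forall>u\<in>U. \<forall>w\<in>W. E u w)"

definition deg :: "('b \<Rightarrow> 'b \<Rightarrow> bool) \<Rightarrow> 'b \<Rightarrow> nat" where
  "deg R x = card {y. R x y}"

definition avg_deg :: "'b set \<Rightarrow> ('b \<Rightarrow> 'b \<Rightarrow> bool) \<Rightarrow> real" where
  "avg_deg W R = (\<Sum>x\<in>W. real (deg R x)) / real (card W)"

definition bipartite_subgraph ::
  "'b set \<Rightarrow> ('b \<Rightarrow> 'b \<Rightarrow> bool) \<Rightarrow> 'b set \<Rightarrow> 'b set \<Rightarrow> ('b \<Rightarrow> 'b \<Rightarrow> bool) \<Rightarrow> bool" where
  "bipartite_subgraph W R X1 X2 H \<longleftrightarrow>
     X1 \<subseteq> W \<and> X2 \<subseteq> W \<and> X1 \<inter> X2 = {} \<and>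
     (\<forall>x y. H x y \<longrightarrow> H y x) \<and>
     (\<forall>x y. H x y \<longrightarrow> R x y) \<and>
     (\<forall>x y. H x y \<longrightarrow> (x \<in> X1 \<and> y \<in> X2) \<or> (x \<in> X2 \<and> y \<in> X1))"

end

theory Submission imports Defs "HOL-Library.Discrete_Functions" begin


definition ind :: "('b \<Rightarrow> 'b \<Rightarrow> bool) \<Rightarrow> 'b \<Rightarrow> 'b \<Rightarrow> real" where
  "ind R a b = (if R a b then 1 else 0)"

definition ee :: "('b \<Rightarrow> 'b \<Rightarrow> bool) \<Rightarrow> 'b set \<Rightarrow> 'b set \<Rightarrow> real" where
  "ee R A B = (\<Sum>a\<in>A. \<Sum>b\<in>B. ind R a b)"

lemma ind_nonneg: "ind R a b \<ge> 0" by (simp add: ind_def)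

lemma ind_sum_card: "finite B \<Longrightarrow> (\<Sum>b\<in>B. ind R a b) = real (card {b\<in>B. R a b})"
  using sum.inter_filter[of B "\<lambda>_. 1::real" "R a"] by (simp add: ind_def)

lemma ee_nonneg: "ee R A B \<ge> 0"
  unfolding ee_def by (intro sum_nonneg ind_nonneg)

lemma ee_sym: assumes "\<And>x y. R x y \<Longrightarrow> R y x" shows "ee R A B = ee R B A"
proof -
  have "\<And>a b. ind R a b = ind R b a" using assms unfolding ind_def by metis
  then show ?thesis unfolding ee_def using sum.swap[of "\<lambda>a b. ind R a b" A B] by simp
qed

lemma ee_union1: "finite A \<Longrightarrow> finite A' \<Longrightarrow> A \<inter> A' = {} \<Longrightarrow> ee R (A \<union> A') B = ee R A B + ee R A' B"
  unfolding ee_def by (simp add: sum.union_disjoint)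

lemma ee_union2: "finite B \<Longrightarrow> finite B' \<Longrightarrow> B \<inter> B' = {} \<Longrightarrow> ee R A (B \<union> B') = ee R A B + ee R A B'"
  unfolding ee_def by (simp add: sum.union_disjoint sum.distrib)

lemma ee_mono2: "finite B' \<Longrightarrow> B \<subseteq> B' \<Longrightarrow> ee R A B \<le> ee R A B'"
  unfolding ee_def by (intro sum_mono sum_mono2) (auto intro: ind_nonneg)

lemma ee_mono1: "finite A' \<Longrightarrow> A \<subseteq> A' \<Longrightarrow> ee R A B \<le> ee R A' B"
  unfolding ee_def by (intro sum_mono2) (auto intro: sum_nonneg ind_nonneg)

lemma card_split:
  assumes "finite Y" "a \<in> Y" "b \<in> Y" "a \<noteq> b"
  shows "card {P\<in>Pow Y. a \<in> P \<and> b \<notin> P} = 2 ^ (card Y - 2)"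
proof -
  have "bij_betw (insert a) (Pow (Y - {a,b})) {P\<in>Pow Y. a \<in> P \<and> b \<notin> P}"
  proof (rule bij_betw_byWitness[where f'="\<lambda>P. P - {a}"])
  qed (use assms in auto)
  then have "card {P\<in>Pow Y. a \<in> P \<and> b \<notin> P} = card (Pow (Y - {a,b}))"
    by (simp add: bij_betw_same_card)
  also have "\<dots> = 2 ^ card (Y - {a,b})" using assms by (simp add: card_Pow)
  also have "card (Y - {a,b}) = card Y - 2" using assms by (simp add: card_Diff_subset)
  finally show ?thesis .
qed

lemma cut_lemma:
  assumes fin: "finite Y" and irr: "\<And>x. \<not> R x x"
  shows "\<exists>P\<subseteq>Y. 4 * ee R P (Y - P) \<ge> ee R Y Y"
proof (cases "ee R Y Y = 0")
  case True then show ?thesis by (intro exI[of _ "{}"]) (simp add: ee_def)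
next
  case False
  have "\<exists>a\<in>Y. (\<Sum>b\<in>Y. ind R a b) \<noteq> 0" using False unfolding ee_def by (meson sum.neutral)
  then obtain a where a: "a \<in> Y" "(\<Sum>b\<in>Y. ind R a b) \<noteq> 0" by blast
  then obtain b where b: "b \<in> Y" "ind R a b \<noteq> 0" by (meson sum.neutral)
  then have ab: "a \<in> Y" "b \<in> Y" "R a b" using a by (auto simp: ind_def split: if_splits)
  then have "a \<noteq> b" using irr by auto
  have "card {a,b} \<le> card Y" using ab fin by (intro card_mono) auto
  then have cY: "card Y \<ge> 2" using \<open>a \<noteq> b\<close> by simp
  let ?F = "Pow Y"
  have key: "\<And>P. P \<in> ?F \<Longrightarrow> ee R P (Y - P) = (\<Sum>a\<in>Y. \<Sum>b\<in>Y. if a \<in> P \<and> b \<notin> P then ind R a b else 0)"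
  proof -
    fix P assume "P \<in> ?F"
    then have PY: "P \<subseteq> Y" by auto
    have "ee R P (Y - P) = (\<Sum>a\<in>Y. if a \<in> P then (\<Sum>b\<in>Y - P. ind R a b) else 0)"
    proof -
      have YP: "Y \<inter> P = P" using PY by blast
      show ?thesis
        unfolding ee_def using sum.inter_restrict[OF fin, of "\<lambda>a. \<Sum>b\<in>Y - P. ind R a b" P]
        unfolding YP by simp
    qed
    also have "\<dots> = (\<Sum>a\<in>Y. \<Sum>b\<in>Y. if a \<in> P \<and> b \<notin> P then ind R a b else 0)"
    proof (rule sum.cong[OF refl])
      fix a assume "a \<in> Y"
      have "(\<Sum>b\<in>Y - P. ind R a b) = (\<Sum>b\<in>Y. if b \<notin> P then ind R a b else 0)"
        using sum.inter_restrict[OF fin, of "\<lambda>b. ind R a b" "- P"] by (simp add: Diff_eq)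
      then show "(if a \<in> P then (\<Sum>b\<in>Y - P. ind R a b) else 0) = (\<Sum>b\<in>Y. if a \<in> P \<and> b \<notin> P then ind R a b else 0)"
        by simp
    qed
    finally show "ee R P (Y - P) = (\<Sum>a\<in>Y. \<Sum>b\<in>Y. if a \<in> P \<and> b \<notin> P then ind R a b else 0)" .
  qed
  have "(\<Sum>P\<in>?F. ee R P (Y - P)) = (\<Sum>P\<in>?F. \<Sum>a\<in>Y. \<Sum>b\<in>Y. if a \<in> P \<and> b \<notin> P then ind R a b else 0)"
    using key by simp
  also have "\<dots> = (\<Sum>a\<in>Y. \<Sum>b\<in>Y. \<Sum>P\<in>?F. if a \<in> P \<and> b \<notin> P then ind R a b else 0)"
  proof -
    have "(\<Sum>P\<in>?F. \<Sum>a\<in>Y. \<Sum>b\<in>Y. if a \<in> P \<and> b \<notin> P then ind R a b else 0)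
       = (\<Sum>a\<in>Y. \<Sum>P\<in>?F. \<Sum>b\<in>Y. if a \<in> P \<and> b \<notin> P then ind R a b else 0)"
      by (rule sum.swap)
    also have "\<dots> = (\<Sum>a\<in>Y. \<Sum>b\<in>Y. \<Sum>P\<in>?F. if a \<in> P \<and> b \<notin> P then ind R a b else 0)"
      by (rule sum.cong[OF refl], rule sum.swap)
    finally show ?thesis .
  qed
  also have "\<dots> = (\<Sum>a\<in>Y. \<Sum>b\<in>Y. ind R a b * 2 ^ (card Y - 2))"
  proof (intro sum.cong refl)
    fix a b assume "a \<in> Y" "b \<in> Y"
    show "(\<Sum>P\<in>?F. if a \<in> P \<and> b \<notin> P then ind R a b else 0) = ind R a b * 2 ^ (card Y - 2)"
    proof (cases "a = b")
      case True then show ?thesis using irr by (simp add: ind_def)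
    next
      case False
      have "(\<Sum>P\<in>?F. if a \<in> P \<and> b \<notin> P then ind R a b else 0) = (\<Sum>P\<in>{P\<in>?F. a \<in> P \<and> b \<notin> P}. ind R a b)"
        using sum.inter_filter[of ?F "\<lambda>_. ind R a b" "\<lambda>P. a \<in> P \<and> b \<notin> P"] fin by simp
      also have "\<dots> = ind R a b * 2 ^ (card Y - 2)"
        using card_split[OF fin \<open>a \<in> Y\<close> \<open>b \<in> Y\<close> False] by simp
      finally show ?thesis .
    qed
  qed
  also have "\<dots> = 2 ^ (card Y - 2) * ee R Y Y"
    unfolding ee_def by (simp add: sum_distrib_left sum_distrib_right mult.commute)
  finally have S: "(\<Sum>P\<in>?F. ee R P (Y - P)) = 2 ^ (card Y - 2) * ee R Y Y" .
  show ?thesis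
  proof (rule ccontr)
    assume "\<not> ?thesis"
    then have lt: "\<And>P. P \<in> ?F \<Longrightarrow> ee R P (Y - P) < ee R Y Y / 4" by force
    have "(\<Sum>P\<in>?F. ee R P (Y - P)) < (\<Sum>P\<in>?F. ee R Y Y / 4)"
      using fin by (intro sum_strict_mono lt) auto
    also have "\<dots> = 2 ^ card Y * ee R Y Y / 4" using fin by (simp add: card_Pow)
    also have "\<dots> = 2 ^ (card Y - 2) * ee R Y Y"
    proof -
      obtain k where k: "card Y = k + 2" using cY by (metis le_add_diff_inverse2)
      have "(2::real) ^ card Y = 2 ^ (card Y - 2) * 4"
        unfolding k by (simp add: power_add)
      then show ?thesis by simp
    qed
    finally show False using S by simp
  qed
qed



lemma ee_remove1: "finite A \<Longrightarrow> x \<in> A \<Longrightarrow> ee R A B = (\<Sum>b\<in>B. ind R x b) + ee R (A - {x}) B"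
  unfolding ee_def by (simp add: sum.remove)

lemma ee_remove2: "finite B \<Longrightarrow> y \<in> B \<Longrightarrow> ee R A B = (\<Sum>a\<in>A. ind R a y) + ee R A (B - {y})"
  unfolding ee_def by (simp add: sum.remove sum.distrib)

lemma opt_lemma:
  fixes th :: "'b \<Rightarrow> real"
  assumes fA: "finite AA" and fB: "finite BB" and sym: "\<And>x y. R x y \<Longrightarrow> R y x"
    and thn: "\<And>x. th x \<ge> 0"
    and pos: "ee R AA BB - sum th AA - sum th BB > 0"
  shows "\<exists>A B. A \<subseteq> AA \<and> B \<subseteq> BB \<and> A \<noteq> {} \<and>
     (\<forall>x\<in>A. (\<Sum>b\<in>B. ind R x b) \<ge> th x) \<and> (\<forall>y\<in>B. (\<Sum>a\<in>A. ind R y a) \<ge> th y)"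
proof -
  define phi where "phi = (\<lambda>(A,B). ee R A B - sum th A - sum th B)"
  define F where "F = Pow AA \<times> Pow BB"
  have fF: "finite F" unfolding F_def using fA fB by simp
  have A0F: "(AA,BB) \<in> F" unfolding F_def by auto
  then have neF: "phi ` F \<noteq> {}" by auto
  obtain z where zF: "z \<in> F" and zm: "phi z = Max (phi ` F)"
    using Max_in[OF finite_imageI[OF fF] neF] by auto
  obtain A B where z: "z = (A,B)" by (cases z)
  have maxz: "\<And>w. w \<in> F \<Longrightarrow> phi w \<le> phi z"
    using zm fF by simp
  have AB: "A \<subseteq> AA" "B \<subseteq> BB" using zF z unfolding F_def by auto
  have fAA: "finite A" "finite B" using AB fA fB finite_subset by auto
  have "phi z > 0" using maxz[OF A0F] pos unfolding phi_def by simp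
  then have phipos: "ee R A B - sum th A - sum th B > 0" unfolding phi_def z by simp
  have Ane: "A \<noteq> {}"
  proof
    assume "A = {}"
    then have "ee R A B = 0" by (simp add: ee_def)
    moreover have "sum th B \<ge> 0" by (intro sum_nonneg thn)
    ultimately show False using phipos \<open>A = {}\<close> by simp
  qed
  have c1: "\<forall>x\<in>A. (\<Sum>b\<in>B. ind R x b) \<ge> th x"
  proof
    fix x assume xA: "x \<in> A"
    have "(A - {x}, B) \<in> F" using AB unfolding F_def by auto
    from maxz[OF this] have "ee R (A - {x}) B - sum th (A - {x}) - sum th B \<le> ee R A B - sum th A - sum th B"
      unfolding phi_def z by simp
    moreover have "ee R A B = (\<Sum>b\<in>B. ind R x b) + ee R (A - {x}) B" using ee_remove1[OF fAA(1) xA] .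
    moreover have "sum th A = th x + sum th (A - {x})" using sum.remove[OF fAA(1) xA] .
    ultimately show "(\<Sum>b\<in>B. ind R x b) \<ge> th x" by linarith
  qed
  have c2: "\<forall>y\<in>B. (\<Sum>a\<in>A. ind R y a) \<ge> th y"
  proof
    fix y assume yB: "y \<in> B"
    have "(A, B - {y}) \<in> F" using AB unfolding F_def by auto
    from maxz[OF this] have "ee R A (B - {y}) - sum th A - sum th (B - {y}) \<le> ee R A B - sum th A - sum th B"
      unfolding phi_def z by simp
    moreover have "ee R A B = (\<Sum>a\<in>A. ind R a y) + ee R A (B - {y})" using ee_remove2[OF fAA(2) yB] .
    moreover have "sum th B = th y + sum th (B - {y})" using sum.remove[OF fAA(2) yB] .
    moreover have "(\<Sum>a\<in>A. ind R a y) = (\<Sum>a\<in>A. ind R y a)"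
      using sym by (intro sum.cong refl) (auto simp: ind_def)
    ultimately show "(\<Sum>a\<in>A. ind R y a) \<ge> th y" by linarith
  qed
  show ?thesis
    apply (rule exI[of _ A], rule exI[of _ B])
    using AB Ane c1 c2 by simp
qed



lemma ee_group1:
  fixes T :: nat
  assumes "finite P" "\<And>x. x \<in> P \<Longrightarrow> cl x < T"
  shows "(\<Sum>i<T. ee R {x\<in>P. cl x = i} B) = ee R P B"
  unfolding ee_def using assms by (intro sum.group) auto

lemma ee_group2:
  fixes T :: nat
  assumes "finite Q" "\<And>x. x \<in> Q \<Longrightarrow> cl x < T"
  shows "(\<Sum>j<T. ee R A {x\<in>Q. cl x = j}) = ee R A Q"
proof -
  have "(\<Sum>j<T. ee R A {x\<in>Q. cl x = j}) = (\<Sum>a\<in>A. \<Sum>j<T. \<Sum>b\<in>{x\<in>Q. cl x = j}. ind R a b)"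
    unfolding ee_def by (rule sum.swap)
  also have "\<dots> = ee R A Q"
    unfolding ee_def using assms by (intro sum.cong refl sum.group) auto
  finally show ?thesis .
qed

lemma th_group:
  fixes T :: nat
  assumes "finite P" "\<And>x. x \<in> P \<Longrightarrow> cl x < T"
  shows "(\<Sum>i<T. sum th {x\<in>P. cl x = i}) = sum th P"
  using assms by (intro sum.group) auto

lemma generic:
  fixes R :: "'b \<Rightarrow> 'b \<Rightarrow> bool" and W :: "'b set" and K d :: real and T :: nat
  assumes fW: "finite W" and inW: "\<And>x y. R x y \<Longrightarrow> x \<in> W \<and> y \<in> W"
    and sym: "\<And>x y. R x y \<Longrightarrow> R y x" and irr: "\<And>x. \<not> R x x"
    and dd: "d = (\<Sum>x\<in>W. real (deg R x)) / real (card W)" and dpos: "d > 0"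
    and degT: "\<And>x. x \<in> W \<Longrightarrow> deg R x < 2 ^ T" and KT: "K > 8 * real T"
  shows "\<exists>i j A B. A \<subseteq> W \<and> B \<subseteq> W \<and> A \<inter> B = {} \<and> A \<noteq> {} \<and>
     (\<forall>x\<in>A. real (deg R x) \<ge> d / 4 \<and> deg R x < 2 ^ (i + 1) \<and> real (card {y\<in>B. R x y}) \<ge> 2 ^ i / K) \<and>
     (\<forall>x\<in>B. real (deg R x) \<ge> d / 4 \<and> deg R x < 2 ^ (j + 1) \<and> real (card {y\<in>A. R x y}) \<ge> 2 ^ j / K)"
proof -
  have degsum: "real (deg R x) = (\<Sum>y\<in>W. ind R x y)" if "x \<in> W" for x
  proof -
    have "{y. R x y} = {y\<in>W. R x y}" using inW by auto
    then show ?thesis unfolding deg_def using ind_sum_card[OF fW] by simp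
  qed
  define S where "S = ee R W W"
  have S_sum: "S = (\<Sum>x\<in>W. real (deg R x))" unfolding S_def ee_def using degsum by simp
  have cW: "card W > 0"
  proof (rule ccontr)
    assume "\<not> card W > 0" then have "card W = 0" by simp
    then show False using dd dpos by simp
  qed
  have Sd: "S = d * real (card W)" using dd cW S_sum by simp
  have Spos: "S > 0" using Sd dpos cW by simp
  define Y where "Y = {x\<in>W. real (deg R x) \<ge> d / 4}"
  define Z where "Z = W - Y"
  have fY: "finite Y" "finite Z" using fW unfolding Y_def Z_def by auto
  have WYZ: "W = Y \<union> Z" "Y \<inter> Z = {}" "Y \<subseteq> W" "Z \<subseteq> W" unfolding Y_def Z_def by auto
  have eZW: "ee R Z W \<le> S / 4"
  proof -
    have "ee R Z W = (\<Sum>x\<in>Z. real (deg R x))" unfolding ee_def using degsum WYZ by (intro sum.cong) auto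
    also have "\<dots> \<le> (\<Sum>x\<in>Z. d / 4)" by (intro sum_mono) (auto simp: Z_def Y_def)
    also have "\<dots> = real (card Z) * (d / 4)" by simp
    also have "\<dots> \<le> real (card W) * (d / 4)"
      using card_mono[OF fW WYZ(4)] dpos by (intro mult_right_mono) auto
    finally show ?thesis using Sd by (simp add: algebra_simps)
  qed
  have eYY: "ee R Y Y \<ge> S / 2"
  proof -
    have "S = ee R Y W + ee R Z W" unfolding S_def using ee_union1[OF fY WYZ(2)] WYZ(1) by simp
    moreover have "ee R Y W = ee R Y Y + ee R Y Z" using ee_union2[OF fY WYZ(2)] WYZ(1) by simp
    moreover have "ee R Y Z = ee R Z Y" using ee_sym[of R, OF sym] by blast
    moreover have "ee R Z Y \<le> ee R Z W" using ee_mono2[OF fW WYZ(3)] .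
    ultimately show ?thesis using eZW by linarith
  qed
  obtain P where PY: "P \<subseteq> Y" and cut: "4 * ee R P (Y - P) \<ge> ee R Y Y"
    using cut_lemma[of Y R, OF fY(1) irr] by blast
  define Q where "Q = Y - P"
  have fPQ: "finite P" "finite Q" using PY fY finite_subset unfolding Q_def by auto
  have ePQ: "ee R P Q \<ge> S / 8" using cut eYY unfolding Q_def by linarith
  have Kpos: "K > 0" using KT by (smt (verit) of_nat_0_le_iff)
  define cl where "cl = (\<lambda>x. floor_log (deg R x))"
  define th where "th = (\<lambda>x. 2 ^ cl x / K)"
  have degY: "deg R x > 0" if "x \<in> Y" for x
  proof -
    have "real (deg R x) > 0" using that dpos unfolding Y_def by auto
    then show ?thesis by simp
  qed
  have clle: "2 ^ cl x \<le> deg R x" if "x \<in> Y" for x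
    unfolding cl_def using floor_log_exp2_le[OF degY[OF that]] .
  have clgt: "deg R x < 2 ^ (cl x + 1)" for x
    unfolding cl_def using floor_log_exp2_gt[of "deg R x"] by simp
  have clT: "cl x < T" if "x \<in> Y" for x
  proof -
    have "(2::nat) ^ cl x < 2 ^ T" using clle[OF that] degT[of x] that WYZ by fastforce
    then show ?thesis using power_less_imp_less_exp by fastforce
  qed
  have thn: "th x \<ge> 0" for x unfolding th_def using Kpos by simp
  have thY: "sum th Y \<le> S / K"
  proof -
    have "sum th Y \<le> (\<Sum>x\<in>Y. real (deg R x) / K)"
    proof (intro sum_mono)
      fix x assume "x \<in> Y"
      have "real (2 ^ cl x) \<le> real (deg R x)" using clle[OF \<open>x \<in> Y\<close>] by linarith
      then show "th x \<le> real (deg R x) / K" unfolding th_def using Kpos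
        by (simp add: divide_right_mono)
    qed
    also have "\<dots> = (\<Sum>x\<in>Y. real (deg R x)) / K" by (simp add: sum_divide_distrib)
    also have "\<dots> \<le> S / K"
      using Kpos S_sum sum_mono2[OF fW WYZ(3), of "\<lambda>x. real (deg R x)"]
      by (intro divide_right_mono) auto
    finally show ?thesis .
  qed
  have PQY: "P \<union> Q = Y" "P \<inter> Q = {}" using PY unfolding Q_def by auto
  have clP: "\<And>x. x \<in> P \<Longrightarrow> cl x < T" and clQ: "\<And>x. x \<in> Q \<Longrightarrow> cl x < T"
    using clT PQY by auto
  define Pc where "Pc = (\<lambda>i. {x\<in>P. cl x = i})"
  define Qc where "Qc = (\<lambda>j. {x\<in>Q. cl x = j})"
  define g where "g = (\<lambda>i j. ee R (Pc i) (Qc j) - sum th (Pc i) - sum th (Qc j))"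
  have gsum: "(\<Sum>i<T. \<Sum>j<T. g i j) = ee R P Q - real T * sum th P - real T * sum th Q"
  proof -
    have "(\<Sum>i<T. \<Sum>j<T. g i j) = (\<Sum>i<T. \<Sum>j<T. ee R (Pc i) (Qc j)) - (\<Sum>i<T. real T * sum th (Pc i)) - (\<Sum>j<T. real T * sum th (Qc j))"
      unfolding g_def by (simp add: sum_subtractf sum_distrib_left)
    also have "(\<Sum>i<T. \<Sum>j<T. ee R (Pc i) (Qc j)) = ee R P Q"
      unfolding Pc_def Qc_def using ee_group2[OF fPQ(2) clQ] ee_group1[OF fPQ(1) clP] by simp
    also have "(\<Sum>i<T. real T * sum th (Pc i)) = real T * sum th P"
      unfolding Pc_def using th_group[of P cl T th, OF fPQ(1) clP] by (simp add: sum_distrib_left[symmetric])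
    also have "(\<Sum>j<T. real T * sum th (Qc j)) = real T * sum th Q"
      unfolding Qc_def using th_group[of Q cl T th, OF fPQ(2) clQ] by (simp add: sum_distrib_left[symmetric])
    finally show ?thesis .
  qed
  have "sum th P + sum th Q = sum th Y" using sum.union_disjoint[OF fPQ PQY(2), of th] unfolding PQY(1) by simp
  then have "real T * sum th P + real T * sum th Q = real T * sum th Y" by (metis distrib_left)
  then have "(\<Sum>i<T. \<Sum>j<T. g i j) = ee R P Q - real T * sum th Y" using gsum by linarith
  moreover have "real T * sum th Y \<le> real T * (S / K)" using thY by (intro mult_left_mono) auto
  moreover have "real T * (S / K) < S / 8"
  proof -
    have "real T * S < S * K / 8" using KT Spos by (simp add: mult.commute)
    then show ?thesis using Kpos by (simp add: field_simps)
  qed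
  ultimately have "(\<Sum>i<T. \<Sum>j<T. g i j) > 0" using ePQ by linarith
  then have "\<exists>i<T. \<exists>j<T. g i j > 0"
  proof (rule contrapos_pp)
    assume "\<not> (\<exists>i<T. \<exists>j<T. g i j > 0)"
    then have "\<And>i j. i < T \<Longrightarrow> j < T \<Longrightarrow> g i j \<le> 0" by (meson not_less)
    then have "(\<Sum>i<T. \<Sum>j<T. g i j) \<le> 0" by (intro sum_nonpos) auto
    then show "\<not> (\<Sum>i<T. \<Sum>j<T. g i j) > 0" by simp
  qed
  then obtain i j where ij: "i < T" "j < T" "g i j > 0" by blast
  have fc: "finite (Pc i)" "finite (Qc j)" unfolding Pc_def Qc_def using fPQ by auto
  obtain A B where AB: "A \<subseteq> Pc i" "B \<subseteq> Qc j" "A \<noteq> {}"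
    and cA: "\<forall>x\<in>A. (\<Sum>b\<in>B. ind R x b) \<ge> th x" and cB: "\<forall>y\<in>B. (\<Sum>a\<in>A. ind R y a) \<ge> th y"
    using opt_lemma[where th=th and R=R and AA="Pc i" and BB="Qc j", OF fc sym thn] ij(3) unfolding g_def by blast
  have fAB: "finite A" "finite B" using AB fc finite_subset by auto
  have AW: "A \<subseteq> W" "B \<subseteq> W" "A \<inter> B = {}" using AB PQY WYZ unfolding Pc_def Qc_def by auto
  have propA: "\<forall>x\<in>A. real (deg R x) \<ge> d / 4 \<and> deg R x < 2 ^ (i + 1) \<and> real (card {y\<in>B. R x y}) \<ge> 2 ^ i / K"
  proof
    fix x assume xA: "x \<in> A"
    then have "x \<in> Y" "cl x = i" using AB PQY unfolding Pc_def by auto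
    then show "real (deg R x) \<ge> d / 4 \<and> deg R x < 2 ^ (i + 1) \<and> real (card {y\<in>B. R x y}) \<ge> 2 ^ i / K"
      using clgt[of x] cA xA ind_sum_card[OF fAB(2)] unfolding Y_def th_def by auto
  qed
  have propB: "\<forall>x\<in>B. real (deg R x) \<ge> d / 4 \<and> deg R x < 2 ^ (j + 1) \<and> real (card {y\<in>A. R x y}) \<ge> 2 ^ j / K"
  proof
    fix x assume xB: "x \<in> B"
    then have "x \<in> Y" "cl x = j" using AB PQY unfolding Qc_def by auto
    then show "real (deg R x) \<ge> d / 4 \<and> deg R x < 2 ^ (j + 1) \<and> real (card {y\<in>A. R x y}) \<ge> 2 ^ j / K"
      using clgt[of x] cB xB ind_sum_card[OF fAB(1)] unfolding Y_def th_def by auto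
  qed
  show ?thesis
    apply (rule exI[of _ i], rule exI[of _ j], rule exI[of _ A], rule exI[of _ B])
    using AW AB(3) propA propB by simp
qed


lemma rpow: "(k::nat) < 2 ^ m \<Longrightarrow> real k < 2 ^ m"
  using of_nat_less_iff[of k "2 ^ m", where 'a=real] by simp

theorem lemma5p4:
  fixes V :: "'a set" and E :: "'a \<Rightarrow> 'a \<Rightarrow> bool" and r n :: nat and d :: real
  assumes "simple_graph V E" and "card V = n" and "r > 0"
    and "d = avg_deg (aux_vertices V r) (aux_adj V E r)" and "d > 0"
  shows "\<exists>D1 D2 X1 X2 H. D1 \<ge> d / 4 \<and> D2 \<ge> d / 4 \<and>
     bipartite_subgraph (aux_vertices V r) (aux_adj V E r) X1 X2 H \<and>
     X1 \<union> X2 \<noteq> {} \<and>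
     (\<forall>x\<in>X1. real (deg H x) \<ge> D1 / (256 * real r ^ 2 * (log 2 (real n))^2) \<and>
              real (deg (aux_adj V E r) x) \<le> D1) \<and>
     (\<forall>x\<in>X2. real (deg H x) \<ge> D2 / (256 * real r ^ 2 * (log 2 (real n))^2) \<and>
              real (deg (aux_adj V E r) x) \<le> D2)"
proof -
  note sg = assms(1)[unfolded simple_graph_def]
  define R where "R = aux_adj V E r"
  define W where "W = aux_vertices V r"
  have fV: "finite V" using sg by simp
  have fW: "finite W" unfolding W_def aux_vertices_def
    by (rule finite_subset[of _ "Pow V"]) (use fV in auto)
  have inW: "\<And>x y. R x y \<Longrightarrow> x \<in> W \<and> y \<in> W" unfolding R_def W_def aux_adj_def by auto
  have sym: "\<And>x y. R x y \<Longrightarrow> R y x" unfolding R_def aux_adj_def using sg by blast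
  have irr: "\<And>x. \<not> R x x"
  proof
    fix x assume "R x x"
    then have "x = {}" "card x = r" unfolding R_def aux_adj_def aux_vertices_def by auto
    then show False using assms(3) by simp
  qed
  have dd: "d = (\<Sum>x\<in>W. real (deg R x)) / real (card W)"
    using assms(4) unfolding avg_deg_def R_def W_def by simp
  have dpos: "d > 0" by fact
  have "\<exists>x\<in>W. deg R x > 0"
  proof (rule ccontr)
    assume "\<not> (\<exists>x\<in>W. deg R x > 0)"
    then have "\<forall>x\<in>W. deg R x = 0" by auto
    then have "(\<Sum>x\<in>W. real (deg R x)) = 0" by simp
    then show False using dd dpos by simp
  qed
  then obtain x0 where x0: "x0 \<in> W" "deg R x0 > 0" by blast
  then have "{y. R x0 y} \<noteq> {}" unfolding deg_def by fastforce
  then obtain y0 where "R x0 y0" by blast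
  then have xy: "x0 \<subseteq> V" "y0 \<subseteq> V" "card x0 = r" "card y0 = r" "x0 \<inter> y0 = {}"
    unfolding R_def aux_adj_def aux_vertices_def by auto
  have fxy: "finite x0" "finite y0" using xy fV finite_subset by auto
  have "card (x0 \<union> y0) = 2 * r" using card_Un_disjoint[OF fxy xy(5)] xy by simp
  moreover have "card (x0 \<union> y0) \<le> n" using card_mono[OF fV, of "x0 \<union> y0"] xy assms(2) by simp
  ultimately have n2r: "2 * r \<le> n" by simp
  then have n2: "n \<ge> 2" using assms(3) by simp
  define L where "L = log 2 (real n)"
  have L1: "L \<ge> 1" unfolding L_def using n2 by simp
  define c where "c = nat \<lceil>L\<rceil>"
  define T where "T = r * c"
  have nle: "n \<le> 2 ^ c"
  proof -
    have "real n = 2 powr L" unfolding L_def using n2 by simp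
    also have "\<dots> \<le> 2 powr (real c)" unfolding c_def using L1 by (intro powr_mono) auto
    also have "\<dots> = 2 ^ c" by (simp add: powr_realpow)
    finally have "real n \<le> real (2 ^ c)" by simp
    then show ?thesis by linarith
  qed
  have cW: "card W = n choose r" unfolding W_def aux_vertices_def
    using n_subsets[OF fV, of r] assms(2) by simp
  have degT: "deg R x < 2 ^ T" if "x \<in> W" for x
  proof -
    have "{y. R x y} \<subseteq> W - {x}" using inW irr by auto
    then have "deg R x \<le> card (W - {x})" unfolding deg_def using fW by (intro card_mono) auto
    also have "\<dots> < card W" using fW that by (rule card_Diff1_less)
    also have "\<dots> \<le> n ^ r" unfolding cW using n2r by (intro binomial_le_pow) simp
    also have "\<dots> \<le> (2 ^ c) ^ r" using nle by (intro power_mono) auto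
    also have "\<dots> = 2 ^ T" unfolding T_def by (simp add: power_mult[symmetric] mult.commute)
    finally show ?thesis .
  qed
  define K where "K = 128 * real r ^ 2 * L ^ 2"
  have r1: "real r \<ge> 1" using assms(3) by simp
  have rL: "real r * L \<ge> 1" using mult_mono[OF r1 L1] by simp
  have KT: "K > 8 * real T"
  proof -
    have "real c \<le> L + 1" unfolding c_def using L1 by linarith
    then have "real T \<le> real r * (L + 1)" unfolding T_def by (simp add: mult_left_mono)
    also have "\<dots> \<le> 2 * (real r * L)" using L1 assms(3) by (simp add: algebra_simps)
    finally have "8 * real T \<le> 16 * (real r * L)" by linarith
    also have "\<dots> < 128 * (real r * L) ^ 2"
    proof -
      have "real r * L * 1 \<le> (real r * L) * (real r * L)" using rL by (intro mult_left_mono) auto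
      then have "16 * (real r * L) < 128 * ((real r * L) * (real r * L))" using rL by linarith
      then show ?thesis by (simp only: power2_eq_square)
    qed
    finally show ?thesis unfolding K_def by (simp add: power_mult_distrib)
  qed
  obtain i j A B where AB: "A \<subseteq> W" "B \<subseteq> W" "A \<inter> B = {}" "A \<noteq> {}"
    and pA: "\<forall>x\<in>A. real (deg R x) \<ge> d / 4 \<and> deg R x < 2 ^ (i + 1) \<and> real (card {y\<in>B. R x y}) \<ge> 2 ^ i / K"
    and pB: "\<forall>x\<in>B. real (deg R x) \<ge> d / 4 \<and> deg R x < 2 ^ (j + 1) \<and> real (card {y\<in>A. R x y}) \<ge> 2 ^ j / K"
    using generic[OF fW inW sym irr dd dpos degT KT] by blast
  have Kpos: "K > 0" using KT by (smt (verit) of_nat_0_le_iff)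
  obtain a where a: "a \<in> A" using AB by auto
  have "real (card {y\<in>B. R a y}) \<ge> 2 ^ i / K" using pA a by blast
  moreover have "2 ^ i / K > 0" using Kpos by simp
  ultimately have "real (card {y\<in>B. R a y}) > 0" by linarith
  then have "B \<noteq> {}" by auto
  then obtain b where b: "b \<in> B" by auto
  define H where "H = (\<lambda>x y. R x y \<and> (x \<in> A \<and> y \<in> B \<or> x \<in> B \<and> y \<in> A))"
  define D1 :: real where "D1 = 2 ^ (i + 1)"
  define D2 :: real where "D2 = 2 ^ (j + 1)"
  have den: "256 * real r ^ 2 * (log 2 (real n))^2 = 2 * K" unfolding K_def L_def by simp
  have degHA: "deg H x = card {y\<in>B. R x y}" if "x \<in> A" for x
  proof -
    have "{y. H x y} = {y\<in>B. R x y}" unfolding H_def using that AB(3) by auto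
    then show ?thesis unfolding deg_def by simp
  qed
  have degHB: "deg H x = card {y\<in>A. R x y}" if "x \<in> B" for x
  proof -
    have "{y. H x y} = {y\<in>A. R x y}" unfolding H_def using that AB(3) by auto
    then show ?thesis unfolding deg_def by simp
  qed
  have D1d: "D1 \<ge> d / 4"
  proof -
    have "real (deg R a) < 2 ^ (i + 1)" using pA a by (intro rpow) blast
    moreover have "real (deg R a) \<ge> d / 4" using pA a by blast
    ultimately show ?thesis unfolding D1_def by linarith
  qed
  have D2d: "D2 \<ge> d / 4"
  proof -
    have "real (deg R b) < 2 ^ (j + 1)" using pB b by (intro rpow) blast
    moreover have "real (deg R b) \<ge> d / 4" using pB b by blast
    ultimately show ?thesis unfolding D2_def by linarith
  qed
  have bip: "bipartite_subgraph W R A B H"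
    unfolding bipartite_subgraph_def using AB sym by (auto simp: H_def)
  have cA: "\<forall>x\<in>A. real (deg H x) \<ge> D1 / (256 * real r ^ 2 * (log 2 (real n))^2) \<and> real (deg R x) \<le> D1"
  proof
    fix x assume xA: "x \<in> A"
    have "real (deg R x) < 2 ^ (i + 1)" using pA xA by (intro rpow) blast
    moreover have "D1 / (2 * K) = 2 ^ i / K" unfolding D1_def by simp
    moreover have "real (deg H x) \<ge> 2 ^ i / K" using pA xA degHA[OF xA] by simp
    ultimately show "real (deg H x) \<ge> D1 / (256 * real r ^ 2 * (log 2 (real n))^2) \<and> real (deg R x) \<le> D1"
      unfolding den D1_def by simp
  qed
  have cB: "\<forall>x\<in>B. real (deg H x) \<ge> D2 / (256 * real r ^ 2 * (log 2 (real n))^2) \<and> real (deg R x) \<le> D2"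
  proof
    fix x assume xB: "x \<in> B"
    have "real (deg R x) < 2 ^ (j + 1)" using pB xB by (intro rpow) blast
    moreover have "D2 / (2 * K) = 2 ^ j / K" unfolding D2_def by simp
    moreover have "real (deg H x) \<ge> 2 ^ j / K" using pB xB degHB[OF xB] by simp
    ultimately show "real (deg H x) \<ge> D2 / (256 * real r ^ 2 * (log 2 (real n))^2) \<and> real (deg R x) \<le> D2"
      unfolding den D2_def by simp
  qed
  have bip': "bipartite_subgraph (aux_vertices V r) (aux_adj V E r) A B H" using bip unfolding R_def W_def .
  have cA': "\<forall>x\<in>A. real (deg H x) \<ge> D1 / (256 * real r ^ 2 * (log 2 (real n))^2) \<and> real (deg (aux_adj V E r) x) \<le> D1"
    using cA unfolding R_def .
  have cB': "\<forall>x\<in>B. real (deg H x) \<ge> D2 / (256 * real r ^ 2 * (log 2 (real n))^2) \<and> real (deg (aux_adj V E r) x) \<le> D2"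
    using cB unfolding R_def .
  have ne: "A \<union> B \<noteq> {}" using AB(4) by blast
  show ?thesis
    apply (rule exI[of _ D1], rule exI[of _ D2], rule exI[of _ A], rule exI[of _ B], rule exI[of _ H])
    apply (intro conjI)
         apply (rule D1d)
        apply (rule D2d)
       apply (rule bip')
      apply (rule ne)
     apply (rule cA')
    apply (rule cB')
    done
qed

end
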